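(* In the setting of the context, suppose Condition I holds ($ZR^i\in L^1$ for all $i$ and all $Z\in\mathcal{Q}$), and let $\tilde{\mathcal{Q}}\subset\mathcal{Q}$ satisfy Conditions POS and INT. If $1\in\tilde{\mathcal{Q}}$, then $\rho$ is strictly expectation bounded (i.e. $\rho(X)>\mathbb{E}[-X]$ for every non-constant $X\in L$) and $\Pi^\rho_0=\{\mathbf{0}\}$. If in addition $\rho_1<\infty$, then for all $\nu\ge0$ the set $\Pi^\rho_\nu$ is nonempty, compact and convex.
   Context: Let $(\Omega,\mathcal{F},\mathbb{P})$ be a probability space and a market: riskless asset $S^0_0=1$, $S^0_1=1+r$, $r>-1$; risky assets $S^1,\dots,S^d$ with constants $S^i_0>0$ and real-valued $\mathcal{F}$-measurable $S^i_1$; returns $R^i:=(S^i_1-S^i_0)/S^i_0$. Standing assumptions: nonredundancy (if $\theta\in\mathbb{R}^{1+d}$ with $\sum_{i=0}^d\theta^iS^i_t=0$ a.s. for $t\in\{0,1\}$ then $\theta=0$), $R^i\in L^1$, $\mathbb{E}[R^i]\ne r$ for some $i$. Excess return: $X_\pi:=\pi\cdot(R-r\mathbf{1})$; $\Pi_\nu:=\{\pi:\mathbb{E}[X_\pi]=\nu\}$. $L$ is a Riesz space with $L^\infty\subset L\subset L^1$ containing all $X_\pi$. $\mathcal{D}:=\{Z\in L^1:Z\ge0,\mathbb{E}[Z]=1\}$; $\mathcal{Q}\subset\mathcal{D}$ is convex with $1\in\mathcal{Q}$ and $\rho(X)=\sup_{Z\in\mathcal{Q}}\mathbb{E}[-ZX]$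 on $L$, with $\mathbb{E}[-ZX]:=\mathbb{E}[ZX^-]-\mathbb{E}[ZX^+]$ and $\mathbb{E}[-ZX]=\infty$ if $\mathbb{E}[ZX^-]=\infty$. $\rho_\nu:=\inf\{\rho(X_\pi):\pi\in\Pi_\nu\}$; $\Pi^\rho_\nu$ is the set of $\pi\in\Pi_\nu$ with $\rho(X_\pi)<\infty$ and $\rho(X_\pi)\le\rho(X_{\pi'})$ for all $\pi'\in\Pi_\nu$. Condition POS for $\tilde{\mathcal{Q}}$: $\tilde Z>0$ a.s. for all $\tilde Z\in\tilde{\mathcal{Q}}$. Condition INT: for every $\tilde Z\in\tilde{\mathcal{Q}}$ there is an $L^\infty$-dense subset $\mathcal{E}$ of $\mathcal{D}\cap L^\infty$ such that for every $Z\in\mathcal{E}$ there is $\lambda\in(0,1)$ with $\lambda Z+(1-\lambda)\tilde Z\in\mathcal{Q}$. *)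

theory Defs
  imports "HOL-Probability.Probability"
begin

text \<open>Risky assets are indexed by a finite type 'd (so d = CARD('d)); portfolios
  are vectors in real^'d. S0 i > 0 is the initial price, S1 i the terminal price.\<close>

definition ret :: "('d \<Rightarrow> real) \<Rightarrow> ('d \<Rightarrow> 'a \<Rightarrow> real) \<Rightarrow> 'd \<Rightarrow> 'a \<Rightarrow> real" where
  "ret S0 S1 i x = (S1 i x - S0 i) / S0 i"

definition excess :: "real \<Rightarrow> ('d \<Rightarrow> 'a \<Rightarrow> real) \<Rightarrow> real^'d::finite \<Rightarrow> 'a \<Rightarrow> real" where
  "excess r R p x = (\<Sum>i\<in>UNIV. p $ i * (R i x - r))"

definition nonredundant ::
  "'a measure \<Rightarrow> real \<Rightarrow> ('d::finite \<Rightarrow> real) \<Rightarrow> ('d \<Rightarrow> 'a \<Rightarrow> real) \<Rightarrow> bool" where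
  "nonredundant M r S0 S1 \<longleftrightarrow>
     (\<forall>(t0::real) (t::real^'d).
        (t0 * 1 + (\<Sum>i\<in>UNIV. t $ i * S0 i) = 0 \<and>
         (AE x in M. t0 * (1 + r) + (\<Sum>i\<in>UNIV. t $ i * S1 i x) = 0))
        \<longrightarrow> t0 = 0 \<and> t = 0)"

text \<open>Sets of functions representing sets of equivalence classes: closed under a.e. equality.\<close>
definition ae_closed :: "'a measure \<Rightarrow> ('a \<Rightarrow> real) set \<Rightarrow> bool" where
  "ae_closed M S \<longleftrightarrow> (\<forall>f\<in>S. \<forall>g\<in>borel_measurable M. (AE x in M. f x = g x) \<longrightarrow> g \<in> S)"

definition Linf :: "'a measure \<Rightarrow> ('a \<Rightarrow> real) set" where
  "Linf M = {f \<in> borel_measurable M. \<exists>C. AE x in M. \<bar>f x\<bar> \<le> C}"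

definition riesz_between :: "'a measure \<Rightarrow> ('a \<Rightarrow> real) set \<Rightarrow> bool" where
  "riesz_between M L \<longleftrightarrow>
     ae_closed M L \<and>
     Linf M \<subseteq> L \<and>
     (\<forall>f\<in>L. integrable M f) \<and>
     (\<forall>f\<in>L. \<forall>g\<in>L. (\<lambda>x. f x + g x) \<in> L) \<and>
     (\<forall>c::real. \<forall>f\<in>L. (\<lambda>x. c * f x) \<in> L) \<and>
     (\<forall>f\<in>L. \<forall>g\<in>L. (\<lambda>x. max (f x) (g x)) \<in> L)"

definition densities :: "'a measure \<Rightarrow> ('a \<Rightarrow> real) set" where
  "densities M = {Z. integrable M Z \<and> (AE x in M. 0 \<le> Z x) \<and> integral\<^sup>L M Z = 1}"

definition convex_fset :: "('a \<Rightarrow> real) set \<Rightarrow> bool" where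
  "convex_fset Q \<longleftrightarrow> (\<forall>Z1\<in>Q. \<forall>Z2\<in>Q. \<forall>t::real. 0 \<le> t \<and> t \<le> 1 \<longrightarrow>
       (\<lambda>x. t * Z1 x + (1 - t) * Z2 x) \<in> Q)"

text \<open>E[-ZX] := E[Z X^-] - E[Z X^+], and = \<infinity> if E[Z X^-] = \<infinity>.\<close>
definition exp_neg :: "'a measure \<Rightarrow> ('a \<Rightarrow> real) \<Rightarrow> ('a \<Rightarrow> real) \<Rightarrow> ereal" where
  "exp_neg M Z X =
     (let a = (\<integral>\<^sup>+ x. ennreal (Z x * max 0 (- X x)) \<partial>M);
          b = (\<integral>\<^sup>+ x. ennreal (Z x * max 0 (X x)) \<partial>M)
      in if a = \<infinity> then \<infinity> else enn2ereal a - enn2ereal b)"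

definition rho :: "'a measure \<Rightarrow> ('a \<Rightarrow> real) set \<Rightarrow> ('a \<Rightarrow> real) \<Rightarrow> ereal" where
  "rho M Q X = (SUP Z\<in>Q. exp_neg M Z X)"

definition Pi_nu :: "'a measure \<Rightarrow> real \<Rightarrow> ('d \<Rightarrow> 'a \<Rightarrow> real) \<Rightarrow> real \<Rightarrow> (real^'d::finite) set" where
  "Pi_nu M r R \<nu> = {p. integral\<^sup>L M (excess r R p) = \<nu>}"

definition rho_nu :: "'a measure \<Rightarrow> ('a \<Rightarrow> real) set \<Rightarrow> real \<Rightarrow> ('d::finite \<Rightarrow> 'a \<Rightarrow> real) \<Rightarrow> real \<Rightarrow> ereal" where
  "rho_nu M Q r R \<nu> = (INF p\<in>Pi_nu M r R \<nu>. rho M Q (excess r R p))"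

definition Pi_rho :: "'a measure \<Rightarrow> ('a \<Rightarrow> real) set \<Rightarrow> real \<Rightarrow> ('d::finite \<Rightarrow> 'a \<Rightarrow> real) \<Rightarrow> real \<Rightarrow> (real^'d) set" where
  "Pi_rho M Q r R \<nu> = {p \<in> Pi_nu M r R \<nu>. rho M Q (excess r R p) < \<infinity> \<and>
       (\<forall>p'\<in>Pi_nu M r R \<nu>. rho M Q (excess r R p) \<le> rho M Q (excess r R p'))}"

definition strictly_expectation_bounded :: "'a measure \<Rightarrow> ('a \<Rightarrow> real) set \<Rightarrow> ('a \<Rightarrow> real) set \<Rightarrow> bool" where
  "strictly_expectation_bounded M L Q \<longleftrightarrow>
     (\<forall>X\<in>L. \<not> (\<exists>c. AE x in M. X x = c) \<longrightarrow> rho M Q X > ereal (integral\<^sup>L M (\<lambda>x. - X x)))"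

definition cond_POS :: "'a measure \<Rightarrow> ('a \<Rightarrow> real) set \<Rightarrow> bool" where
  "cond_POS M Qt \<longleftrightarrow> (\<forall>Z\<in>Qt. AE x in M. 0 < Z x)"

definition cond_INT :: "'a measure \<Rightarrow> ('a \<Rightarrow> real) set \<Rightarrow> ('a \<Rightarrow> real) set \<Rightarrow> bool" where
  "cond_INT M Q Qt \<longleftrightarrow>
     (\<forall>Zt\<in>Qt. \<exists>E. E \<subseteq> densities M \<inter> Linf M \<and>
        (\<forall>W\<in>densities M \<inter> Linf M. \<forall>\<epsilon>>0. \<exists>Z\<in>E. AE x in M. \<bar>Z x - W x\<bar> \<le> \<epsilon>) \<and>
        (\<forall>Z\<in>E. \<exists>l::real. 0 < l \<and> l < 1 \<and> (\<lambda>x. l * Z x + (1 - l) * Zt x) \<in> Q))"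

end

theory Submission
  imports Defs
begin

lemma exp_neg_int:
  assumes Z0: "AE x in M. 0 \<le> Z x" and gi: "integrable M (\<lambda>x. Z x * X x)"
  shows "exp_neg M Z X = ereal (- integral\<^sup>L M (\<lambda>x. Z x * X x))"
proof -
  let ?g = "\<lambda>x. Z x * X x"
  have i1: "integrable M (\<lambda>x. max 0 (?g x))" using gi by auto
  have i2: "integrable M (\<lambda>x. max 0 (- ?g x))" using gi by auto
  have a: "(\<integral>\<^sup>+ x. ennreal (Z x * max 0 (- X x)) \<partial>M) = ennreal (integral\<^sup>L M (\<lambda>x. max 0 (- ?g x)))"
  proof -
    have "(\<integral>\<^sup>+ x. ennreal (Z x * max 0 (- X x)) \<partial>M) = (\<integral>\<^sup>+ x. ennreal (max 0 (- ?g x)) \<partial>M)"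
      apply (rule nn_integral_cong_AE) using Z0 apply eventually_elim
      by (auto simp: max_def mult_le_0_iff) 
    also have "\<dots> = ennreal (integral\<^sup>L M (\<lambda>x. max 0 (- ?g x)))"
      by (rule nn_integral_eq_integral[OF i2]) auto
    finally show ?thesis .
  qed
  have b: "(\<integral>\<^sup>+ x. ennreal (Z x * max 0 (X x)) \<partial>M) = ennreal (integral\<^sup>L M (\<lambda>x. max 0 (?g x)))"
  proof -
    have "(\<integral>\<^sup>+ x. ennreal (Z x * max 0 (X x)) \<partial>M) = (\<integral>\<^sup>+ x. ennreal (max 0 (?g x)) \<partial>M)"
      apply (rule nn_integral_cong_AE) using Z0 apply eventually_elim
      by (auto simp: max_def mult_le_0_iff zero_le_mult_iff) 
    also have "\<dots> = ennreal (integral\<^sup>L M (\<lambda>x. max 0 (?g x)))"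
      by (rule nn_integral_eq_integral[OF i1]) auto
    finally show ?thesis .
  qed
  have "integral\<^sup>L M ?g = integral\<^sup>L M (\<lambda>x. max 0 (?g x) - max 0 (- ?g x))"
    by (rule Bochner_Integration.integral_cong) (auto simp: max_def)
  also have "\<dots> = integral\<^sup>L M (\<lambda>x. max 0 (?g x)) - integral\<^sup>L M (\<lambda>x. max 0 (- ?g x))"
    using i1 i2 by simp
  finally have e: "integral\<^sup>L M ?g = \<dots>" .
  have n1: "integral\<^sup>L M (\<lambda>x. max 0 (?g x)) \<ge> 0" by (rule integral_nonneg_AE) auto
  have n2: "integral\<^sup>L M (\<lambda>x. max 0 (- ?g x)) \<ge> 0" by (rule integral_nonneg_AE) auto
  show ?thesis unfolding exp_neg_def Let_def a b using n1 n2 e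
    by (simp add: enn2ereal_ennreal)
qed

lemma seb:
  assumes prob: "prob_space M" and L: "riesz_between M L"
    and Q_dens: "Q \<subseteq> densities M" and Qt_sub: "Qt \<subseteq> Q"
    and INT: "cond_INT M Q Qt" and one_Qt: "(\<lambda>_. 1) \<in> Qt"
  shows "strictly_expectation_bounded M L Q"
  unfolding strictly_expectation_bounded_def
proof (intro ballI impI)
  fix X assume XL: "X \<in> L" and nc: "\<not> (\<exists>c. AE x in M. X x = c)"
  interpret prob_space M by (rule prob)
  have Xi: "integrable M X" using XL L unfolding riesz_between_def by auto
  have Xm: "X \<in> borel_measurable M" using Xi by auto
  define m where "m = integral\<^sup>L M X"
  define A where "A = {x\<in>space M. X x < m}"
  have Am: "A \<in> sets M" unfolding A_def using Xm by measurable
  have PA: "emeasure M A \<noteq> 0"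
  proof
    assume "emeasure M A = 0"
    then have "AE x in M. \<not> (X x < m)"
      using AE_iff_measurable[OF Am, of "\<lambda>x. \<not> (X x < m)"] unfolding A_def by auto
    then have ae0: "AE x in M. 0 \<le> X x - m" by auto
    have ii: "integrable M (\<lambda>x. X x - m)" using Xi by auto
    have "integral\<^sup>L M (\<lambda>x. X x - m) = 0"
      using Xi by (simp add: m_def prob_space)
    then have "AE x in M. X x - m = 0" using integral_nonneg_eq_0_iff_AE[OF ii ae0] by simp
    then have "AE x in M. X x = m" by auto
    then show False using nc by blast
  qed
  define P where "P = measure M A"
  have Ppos: "P > 0" using PA unfolding P_def by (simp add: emeasure_eq_measure zero_less_measure_iff)
  have iA: "integrable M (\<lambda>x. X x * indicator A x)" using integrable_real_mult_indicator[OF Am Xi] .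
  have iAm: "integrable M (\<lambda>x. m * indicator A x)" using integrable_real_mult_indicator[OF Am, of "\<lambda>_. m"] by simp
  have lt: "integral\<^sup>L M (\<lambda>x. X x * indicator A x) < integral\<^sup>L M (\<lambda>x. m * indicator A x)"
  proof (rule integral_less_AE[OF iA iAm PA Am])
    show "AE x\<in>A in M. X x * indicator A x \<noteq> m * indicator A x"
      by (auto simp: A_def)
    show "AE x in M. X x * indicator A x \<le> m * indicator A x"
      by (auto simp: A_def indicator_def)
  qed
  have mP: "integral\<^sup>L M (\<lambda>x. m * indicator A x) = m * P"
    using Am by (simp add: P_def)
  define W where "W = (\<lambda>x. indicator A x / P :: real)"
  have WXe: "(\<lambda>x. W x * X x) = (\<lambda>x. (X x * indicator A x) / P)" by (auto simp: W_def)
  have iW: "integrable M (\<lambda>x. W x * X x)" unfolding WXe using iA by simp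
  have "integral\<^sup>L M (\<lambda>x. W x * X x) = integral\<^sup>L M (\<lambda>x. X x * indicator A x) / P"
    unfolding WXe by simp
  also have "\<dots> < m * P / P" using lt mP Ppos by (intro divide_strict_right_mono) linarith+
  also have "\<dots> = m" using Ppos by simp
  finally have WX: "integral\<^sup>L M (\<lambda>x. W x * X x) < m" .
  have Wd: "W \<in> densities M"
  proof -
    have "integrable M (indicator A :: _ \<Rightarrow> real)"
      using Am by (simp add: integrable_indicator_iff emeasure_eq_measure)
    then have "integrable M W" unfolding W_def by simp
    moreover have "AE x in M. 0 \<le> W x" using Ppos by (auto simp: W_def)
    moreover have "integral\<^sup>L M W = 1" using Ppos Am by (simp add: W_def P_def)
    ultimately show ?thesis unfolding densities_def by auto
  qed
  have WLi: "W \<in> Linf M"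
  proof -
    have "W \<in> borel_measurable M" using Wd unfolding densities_def by auto
    moreover have "AE x in M. \<bar>W x\<bar> \<le> 1 / P" using Ppos by (auto simp: W_def indicator_def)
    ultimately show ?thesis unfolding Linf_def by auto
  qed
  define C where "C = integral\<^sup>L M (\<lambda>x. \<bar>X x\<bar>)"
  have C0: "C \<ge> 0" unfolding C_def by (rule integral_nonneg_AE) auto
  define \<delta> where "\<delta> = m - integral\<^sup>L M (\<lambda>x. W x * X x)"
  have d0: "\<delta> > 0" using WX by (simp add: \<delta>_def)
  define \<epsilon> where "\<epsilon> = \<delta> / (2 * (C + 1))"
  have e0: "\<epsilon> > 0" using d0 C0 by (simp add: \<epsilon>_def)
  have eC: "\<epsilon> * C < \<delta>"
  proof -
    have "\<epsilon> * C = \<delta> * (C / (2 * (C + 1)))" by (simp add: \<epsilon>_def)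
    also have "\<dots> < \<delta> * 1" using d0 C0 by (intro mult_strict_left_mono) (auto simp: field_simps)
    finally show ?thesis by simp
  qed
  obtain E where Esub: "E \<subseteq> densities M \<inter> Linf M"
    and Eden: "\<forall>W\<in>densities M \<inter> Linf M. \<forall>\<epsilon>>0. \<exists>Z\<in>E. AE x in M. \<bar>Z x - W x\<bar> \<le> \<epsilon>"
    and Eint: "\<forall>Z\<in>E. \<exists>l::real. 0 < l \<and> l < 1 \<and> (\<lambda>x. l * Z x + (1 - l) * 1) \<in> Q"
    using INT one_Qt unfolding cond_INT_def by fastforce
  obtain Z' where Z'E: "Z' \<in> E" and Z'W: "AE x in M. \<bar>Z' x - W x\<bar> \<le> \<epsilon>"
    using Eden Wd WLi e0 by blast
  obtain l where l0: "0 < l" and l1: "l < 1" and ZcQ: "(\<lambda>x. l * Z' x + (1 - l) * 1) \<in> Q"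
    using Eint Z'E by blast
  have Z'd: "Z' \<in> densities M" and Z'L: "Z' \<in> Linf M" using Esub Z'E by auto
  obtain B where ZB: "AE x in M. \<bar>Z' x\<bar> \<le> B" using Z'L unfolding Linf_def by auto
  have Z'm: "Z' \<in> borel_measurable M" using Z'd unfolding densities_def by auto
  have iZ: "integrable M (\<lambda>x. Z' x * X x)"
  proof (rule Bochner_Integration.integrable_bound[where f="\<lambda>x. B * X x"])
    show "integrable M (\<lambda>x. B * X x)" using Xi by simp
    show "(\<lambda>x. Z' x * X x) \<in> borel_measurable M" using Z'm Xm by measurable
    show "AE x in M. norm (Z' x * X x) \<le> norm (B * X x)"
      using ZB
    proof eventually_elim
      case (elim x)
      have "\<bar>Z' x\<bar> * \<bar>X x\<bar> \<le> \<bar>B\<bar> * \<bar>X x\<bar>" using elim by (intro mult_right_mono) auto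
      then show ?case by (simp add: abs_mult)
    qed
  qed
  define Zc where "Zc = (\<lambda>x. l * Z' x + (1 - l) * 1)"
  have Zcd: "Zc \<in> densities M" using ZcQ Q_dens unfolding Zc_def by auto
  have Zc0: "AE x in M. 0 \<le> Zc x" using Zcd unfolding densities_def by auto
  have ZcXe: "(\<lambda>x. Zc x * X x) = (\<lambda>x. l * (Z' x * X x) + (1 - l) * X x)"
    by (auto simp: Zc_def algebra_simps)
  have iZc: "integrable M (\<lambda>x. Zc x * X x)" unfolding ZcXe using iZ Xi by simp
  have eZc: "integral\<^sup>L M (\<lambda>x. Zc x * X x) = l * integral\<^sup>L M (\<lambda>x. Z' x * X x) + (1 - l) * m"
    unfolding ZcXe using iZ Xi by (simp add: m_def)
  have idiff: "integrable M (\<lambda>x. (Z' x - W x) * X x)"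
    using iZ iW by (simp add: left_diff_distrib)
  have "integral\<^sup>L M (\<lambda>x. Z' x * X x) - integral\<^sup>L M (\<lambda>x. W x * X x)
      = integral\<^sup>L M (\<lambda>x. (Z' x - W x) * X x)"
    using iZ iW by (simp add: left_diff_distrib)
  also have "\<dots> \<le> integral\<^sup>L M (\<lambda>x. \<bar>(Z' x - W x) * X x\<bar>)"
    by (rule integral_mono) (use idiff in auto)
  also have "\<dots> \<le> integral\<^sup>L M (\<lambda>x. \<epsilon> * \<bar>X x\<bar>)"
  proof (rule integral_mono_AE)
    show "integrable M (\<lambda>x. \<bar>(Z' x - W x) * X x\<bar>)" using idiff by auto
    show "integrable M (\<lambda>x. \<epsilon> * \<bar>X x\<bar>)" using Xi by auto
    show "AE x in M. \<bar>(Z' x - W x) * X x\<bar> \<le> \<epsilon> * \<bar>X x\<bar>"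
      using Z'W
    proof eventually_elim
      case (elim x)
      then show ?case by (simp add: abs_mult mult_right_mono)
    qed
  qed
  also have "\<dots> = \<epsilon> * C" by (simp add: C_def)
  finally have "integral\<^sup>L M (\<lambda>x. Z' x * X x) < m" using eC unfolding \<delta>_def by linarith
  then have "l * integral\<^sup>L M (\<lambda>x. Z' x * X x) < l * m" using l0 by simp
  then have lt3: "integral\<^sup>L M (\<lambda>x. Zc x * X x) < m" unfolding eZc by (simp add: algebra_simps)
  have "ereal (integral\<^sup>L M (\<lambda>x. - X x)) < ereal (- integral\<^sup>L M (\<lambda>x. Zc x * X x))"
    using lt3 by (simp add: m_def)
  also have "\<dots> = exp_neg M Zc X" using exp_neg_int[OF Zc0 iZc] by simp
  also have "\<dots> \<le> rho M Q X" unfolding rho_def using ZcQ unfolding Zc_def[symmetric] by (rule SUP_upper)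
  finally show "rho M Q X > ereal (integral\<^sup>L M (\<lambda>x. - X x))" .
qed
locale mkt =
  fixes M :: "'a measure" and r :: real
    and S0 :: "'d::finite \<Rightarrow> real" and S1 :: "'d \<Rightarrow> 'a \<Rightarrow> real"
    and L Q Qt :: "('a \<Rightarrow> real) set"
  assumes prob: "prob_space M"
    and r_gt: "r > -1"
    and S0_pos: "\<forall>i. S0 i > 0"
    and S1_meas: "\<forall>i. S1 i \<in> borel_measurable M"
    and nonred: "nonredundant M r S0 S1"
    and R_int: "\<forall>i. integrable M (ret S0 S1 i)"
    and nontriv: "\<exists>i. integral\<^sup>L M (ret S0 S1 i) \<noteq> r"
    and L: "riesz_between M L"
    and X_in_L: "\<forall>p. excess r (ret S0 S1) p \<in> L"
    and Q_dens: "Q \<subseteq> densities M"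
    and Q_convex: "convex_fset Q"
    and Q_ae: "ae_closed M Q"
    and one_Q: "(\<lambda>_. 1) \<in> Q"
    and condI: "\<forall>Z\<in>Q. \<forall>i. integrable M (\<lambda>x. Z x * ret S0 S1 i x)"
    and Qt_sub: "Qt \<subseteq> Q"
    and POS: "cond_POS M Qt"
    and INT: "cond_INT M Q Qt"
    and one_Qt: "(\<lambda>_. 1) \<in> Qt"
begin

abbreviation "R \<equiv> ret S0 S1"
abbreviation "XX p \<equiv> excess r R p"

definition cz :: "('a \<Rightarrow> real) \<Rightarrow> 'd \<Rightarrow> real" where
  "cz Z i = integral\<^sup>L M (\<lambda>x. Z x * (R i x - r))"

definition ell :: "('a \<Rightarrow> real) \<Rightarrow> real^'d \<Rightarrow> real" where
  "ell Z p = - (\<Sum>i\<in>UNIV. p $ i * cz Z i)"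

lemma SEB: "strictly_expectation_bounded M L Q"
  using seb[OF prob L Q_dens Qt_sub INT one_Qt] .

lemma QZ: assumes "Z \<in> Q" shows "integrable M Z" "AE x in M. 0 \<le> Z x"
  using assms Q_dens unfolding densities_def by auto

lemma iZR: assumes "Z \<in> Q" shows "integrable M (\<lambda>x. Z x * (R i x - r))"
proof -
  have "(\<lambda>x. Z x * (R i x - r)) = (\<lambda>x. Z x * R i x - r * Z x)" by (auto simp: algebra_simps)
  then show ?thesis using condI assms QZ(1)[OF assms] by simp
qed

lemma ZX_eq: "(\<lambda>x. Z x * XX p x) = (\<lambda>x. \<Sum>i\<in>UNIV. p $ i * (Z x * (R i x - r)))"
  by (auto simp: excess_def sum_distrib_left algebra_simps)

lemma iZX: assumes "Z \<in> Q" shows "integrable M (\<lambda>x. Z x * XX p x)"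
  unfolding ZX_eq using iZR[OF assms] by auto

lemma intZX: assumes "Z \<in> Q" shows "integral\<^sup>L M (\<lambda>x. Z x * XX p x) = - ell Z p"
proof -
  have "integral\<^sup>L M (\<lambda>x. \<Sum>i\<in>UNIV. p $ i * (Z x * (R i x - r))) = (\<Sum>i\<in>UNIV. integral\<^sup>L M (\<lambda>x. p $ i * (Z x * (R i x - r))))"
    by (rule Bochner_Integration.integral_sum[where f="\<lambda>i x. p $ i * (Z x * (R i x - r))"]) (use iZR[OF assms] in auto)
  then show ?thesis unfolding ZX_eq ell_def cz_def by simp
qed

lemma expX: assumes "Z \<in> Q" shows "exp_neg M Z (XX p) = ereal (ell Z p)"
  using exp_neg_int[OF QZ(2)[OF assms] iZX[OF assms]] intZX[OF assms] by simp

lemma rhoX: "rho M Q (XX p) = (SUP Z\<in>Q. ereal (ell Z p))"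
  unfolding rho_def using expX by (intro SUP_cong) auto

lemma intX: "integral\<^sup>L M (XX p) = - ell (\<lambda>_. 1) p"
  using intZX[OF one_Q, of p] by simp

lemma Pi_eq: "Pi_nu M r R \<nu> = {p. - ell (\<lambda>_. 1) p = \<nu>}"
  unfolding Pi_nu_def intX by simp

lemma ell_le_rho: "Z \<in> Q \<Longrightarrow> ereal (ell Z p) \<le> rho M Q (XX p)"
  unfolding rhoX by (rule SUP_upper)

lemma rho_le_iff: "rho M Q (XX p) \<le> ereal c \<longleftrightarrow> (\<forall>Z\<in>Q. ell Z p \<le> c)"
  unfolding rhoX by (simp add: SUP_le_iff)

lemma ell_lin: "ell Z (a *\<^sub>R p + b *\<^sub>R q) = a * ell Z p + b * ell Z q"
  by (simp add: ell_def sum_distrib_left sum.distrib algebra_simps)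

lemma ell_diff: "ell Z (p - q) = ell Z p - ell Z q"
  by (simp add: ell_def sum_subtractf algebra_simps)

lemma ell_scale: "ell Z (a *\<^sub>R p) = a * ell Z p"
  by (simp add: ell_def sum_distrib_left algebra_simps)

lemma ell_zero: "ell Z 0 = 0"
  by (simp add: ell_def)

lemma ell_tendsto: "(f \<longlongrightarrow> q) F \<Longrightarrow> ((\<lambda>n. ell Z (f n)) \<longlongrightarrow> ell Z q) F"
  unfolding ell_def by (intro tendsto_intros)

lemma ell_cont: "continuous_on UNIV (ell Z)"
  unfolding ell_def by (intro continuous_intros)

lemma XX_nonconst:
  assumes p0: "p \<noteq> 0" and ip: "integral\<^sup>L M (XX p) = 0"
  shows "\<not> (\<exists>c. AE x in M. XX p x = c)"
proof
  assume "\<exists>c. AE x in M. XX p x = c"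
  then obtain c where c: "AE x in M. XX p x = c" by blast
  interpret prob_space M by (rule prob)
  have "integral\<^sup>L M (XX p) = integral\<^sup>L M (\<lambda>_. c)" by (rule integral_cong_AE) (use c X_in_L L in \<open>auto simp: riesz_between_def\<close>)
  then have "c = 0" using ip by (simp add: prob_space)
  with c have c0: "AE x in M. XX p x = 0" by simp
  define t0 where "t0 = - (\<Sum>i\<in>UNIV. p $ i)"
  define t where "t = (\<chi> i. p $ i / S0 i)"
  have S0nz: "S0 i \<noteq> 0" for i using S0_pos by (metis less_irrefl)
  have h1: "t0 * 1 + (\<Sum>i\<in>UNIV. t $ i * S0 i) = 0"
    using S0nz by (simp add: t0_def t_def)
  have h2: "AE x in M. t0 * (1 + r) + (\<Sum>i\<in>UNIV. t $ i * S1 i x) = 0"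
    using c0
  proof eventually_elim
    case (elim x)
    have "t0 * (1 + r) = (\<Sum>i\<in>UNIV. - (p $ i * (1 + r)))" by (simp add: t0_def sum_distrib_right sum_negf)
    then have "t0 * (1 + r) + (\<Sum>i\<in>UNIV. t $ i * S1 i x) = (\<Sum>i\<in>UNIV. - (p $ i * (1 + r)) + t $ i * S1 i x)"
      by (simp only: sum.distrib)
    also have "\<dots> = (\<Sum>i\<in>UNIV. p $ i * (R i x - r))"
      by (rule sum.cong) (auto simp: t_def ret_def field_simps S0nz)
    also have "\<dots> = 0" using elim by (simp add: excess_def)
    finally show ?case .
  qed
  have "t = 0" using nonred h1 h2 unfolding nonredundant_def by blast
  then have "p $ i = 0" for i using S0nz by (auto simp: t_def vec_eq_iff)
  then show False using p0 by (auto simp: vec_eq_iff)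
qed

lemma rho_pos:
  assumes p0: "p \<noteq> 0" and ip: "ell (\<lambda>_. 1) p = 0"
  shows "rho M Q (XX p) > 0"
proof -
  have i0: "integral\<^sup>L M (XX p) = 0" using ip intX by simp
  have "ereal (integral\<^sup>L M (\<lambda>x. - XX p x)) < rho M Q (XX p)"
    using SEB X_in_L XX_nonconst[OF p0 i0] unfolding strictly_expectation_bounded_def by blast
  then show ?thesis using i0 by (simp add: zero_ereal_def)
qed

end
context mkt begin

lemma rho_XX0: "rho M Q (XX 0) = 0"
proof -
  have "rho M Q (XX 0) = (SUP Z\<in>Q. ereal 0)" unfolding rhoX ell_zero ..
  also have "\<dots> = 0" using one_Q by (metis SUP_const empty_iff zero_ereal_def)
  finally show ?thesis .
qed

lemma Pi_rho0: "Pi_rho M Q r R 0 = {0}"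
proof -
  have z: "0 \<in> Pi_nu M r R 0" unfolding Pi_eq by (simp add: ell_zero)
  have ge: "0 \<le> rho M Q (XX p')" if "p' \<in> Pi_nu M r R 0" for p'
  proof (cases "p' = 0")
    case True then show ?thesis using rho_XX0 by simp
  next
    case False
    have "ell (\<lambda>_. 1) p' = 0" using that unfolding Pi_eq by simp
    then show ?thesis using rho_pos[OF False] by simp
  qed
  have "0 \<in> Pi_rho M Q r R 0" unfolding Pi_rho_def using z ge rho_XX0 by auto
  moreover have "p = 0" if "p \<in> Pi_rho M Q r R 0" for p
  proof (rule ccontr)
    assume p0: "p \<noteq> 0"
    have pP: "p \<in> Pi_nu M r R 0" and le: "rho M Q (XX p) \<le> rho M Q (XX 0)"
      using that z unfolding Pi_rho_def by auto
    have "ell (\<lambda>_. 1) p = 0" using pP unfolding Pi_eq by simp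
    then have "rho M Q (XX p) > 0" using rho_pos[OF p0] by simp
    then show False using le rho_XX0 by simp
  qed
  ultimately show ?thesis by blast
qed

definition KK :: "real \<Rightarrow> real \<Rightarrow> (real^'d) set" where
  "KK \<nu> c = {p. - ell (\<lambda>_. 1) p = \<nu> \<and> (\<forall>Z\<in>Q. ell Z p \<le> c)}"

lemma KK_closed: "closed (KK \<nu> c)"
proof -
  have "KK \<nu> c = {p. - ell (\<lambda>_. 1) p = \<nu>} \<inter> (\<Inter>Z\<in>Q. {p. ell Z p \<le> c})"
    unfolding KK_def by auto
  moreover have "closed {p. - ell (\<lambda>_. 1) p = \<nu>}"
    by (intro closed_Collect_eq continuous_intros ell_cont)
  moreover have "closed {p. ell Z p \<le> c}" for Z
    by (intro closed_Collect_le continuous_intros ell_cont)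
  ultimately show ?thesis by (simp add: closed_Int closed_INT)
qed

lemma KK_convex: "convex (KK \<nu> c)"
proof (rule convexI)
  fix x y u v assume x: "x \<in> KK \<nu> c" and y: "y \<in> KK \<nu> c" and u0: "0 \<le> u" and v0: "0 \<le> v" and uv1: "u + v = (1::real)"
  have uv: "0 \<le> u \<and> 0 \<le> v \<and> u + v = (1::real)" using u0 v0 uv1 by simp
  have "- ell (\<lambda>_. 1) (u *\<^sub>R x + v *\<^sub>R y) = u * (- ell (\<lambda>_. 1) x) + v * (- ell (\<lambda>_. 1) y)"
    by (simp add: ell_lin)
  also have "\<dots> = \<nu>" using x y uv unfolding KK_def by (simp add: distrib_right[symmetric])
  finally have 1: "- ell (\<lambda>_. 1) (u *\<^sub>R x + v *\<^sub>R y) = \<nu>" .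
  have 2: "ell Z (u *\<^sub>R x + v *\<^sub>R y) \<le> c" if Z: "Z \<in> Q" for Z
  proof -
    have "u * ell Z x \<le> u * c" using x Z uv unfolding KK_def by (intro mult_left_mono) auto
    moreover have "v * ell Z y \<le> v * c" using y Z uv unfolding KK_def by (intro mult_left_mono) auto
    ultimately have "u * ell Z x + v * ell Z y \<le> (u + v) * c" by (simp add: distrib_right)
    then show ?thesis using uv by (simp add: ell_lin)
  qed
  show "u *\<^sub>R x + v *\<^sub>R y \<in> KK \<nu> c" using 1 2 unfolding KK_def by auto
qed

lemma KK_bounded: "bounded (KK \<nu> c)"
proof (rule ccontr)
  assume nb: "\<not> bounded (KK \<nu> c)"
  then obtain p0 where p0: "p0 \<in> KK \<nu> c" by fastforce
  have "\<forall>n::nat. \<exists>p\<in>KK \<nu> c. real n + 1 < dist p0 p"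
    using nb unfolding bounded_def by (meson not_le)
  then obtain pn where pn: "\<And>n. pn n \<in> KK \<nu> c" and pd: "\<And>n. real n + 1 < dist p0 (pn n)"
    by metis
  define N where "N n = norm (pn n - p0)" for n
  have Ngt: "real n + 1 < N n" for n using pd[of n] by (simp add: N_def dist_norm norm_minus_commute)
  have Npos: "N n > 0" for n using Ngt[of n] by (smt (verit) of_nat_0_le_iff)
  define dn where "dn n = (1 / N n) *\<^sub>R (pn n - p0)" for n
  define U where "U = {q::real^'d. ell (\<lambda>_. 1) q = 0 \<and> norm q = 1}"
  have Uc: "compact U"
  proof -
    have "closed U"
    proof -
      have "U = {q. ell (\<lambda>_. 1) q = 0} \<inter> {q. norm q = 1}" unfolding U_def by auto
      moreover have "closed {q. ell (\<lambda>_. 1) q = 0}" by (intro closed_Collect_eq continuous_intros ell_cont)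
      moreover have "closed {q::real^'d. norm q = 1}" by (intro closed_Collect_eq continuous_intros)
      ultimately show ?thesis by auto
    qed
    moreover have "bounded U" unfolding bounded_iff U_def by auto
    ultimately show ?thesis by (simp add: compact_eq_bounded_closed)
  qed
  have dU: "dn n \<in> U" for n
  proof -
    have "ell (\<lambda>_. 1) (dn n) = (1 / N n) * (ell (\<lambda>_. 1) (pn n) - ell (\<lambda>_. 1) p0)"
      unfolding dn_def by (simp add: ell_scale ell_diff)
    also have "\<dots> = 0" using pn[of n] p0 unfolding KK_def by simp
    finally show ?thesis unfolding U_def dn_def using Npos[of n] by (simp add: N_def)
  qed
  obtain q rr where qU: "q \<in> U" and rr: "strict_mono rr" and lim: "(dn \<circ> rr) \<longlonglongrightarrow> q"
    using seq_compactE[OF compact_imp_seq_compact[OF Uc], of dn] dU by blast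
  have ellq: "ell Z q \<le> 0" if Z: "Z \<in> Q" for Z
  proof -
    define K where "K = c - ell Z p0"
    have K0: "K \<ge> 0" using p0 Z unfolding KK_def K_def by auto
    have bnd: "ell Z (dn (rr n)) \<le> K * inverse (real (Suc n))" for n
    proof -
      have "ell Z (dn (rr n)) = (ell Z (pn (rr n)) - ell Z p0) / N (rr n)"
        unfolding dn_def by (simp add: ell_scale ell_diff)
      also have "\<dots> \<le> K / N (rr n)"
        using pn[of "rr n"] Z Npos[of "rr n"] unfolding KK_def K_def by (intro divide_right_mono) auto
      also have "\<dots> \<le> K / (real (Suc n))"
      proof (rule divide_left_mono[OF _ K0])
        have "n \<le> rr n" using seq_suble[OF rr] .
        then show "real (Suc n) \<le> N (rr n)" using Ngt[of "rr n"] by simp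
        show "0 < N (rr n) * real (Suc n)" using Npos[of "rr n"] by simp
      qed
      finally show ?thesis by (simp add: divide_inverse)
    qed
    have l1: "(\<lambda>n. ell Z (dn (rr n))) \<longlonglongrightarrow> ell Z q"
      using ell_tendsto[OF lim] by (simp add: o_def)
    have l2: "(\<lambda>n. K * inverse (real (Suc n))) \<longlonglongrightarrow> 0"
      using tendsto_mult_right_zero[OF LIMSEQ_inverse_real_of_nat] by simp
    show ?thesis using LIMSEQ_le[OF l1 l2] bnd by blast
  qed
  have q0: "q \<noteq> 0" and q1: "ell (\<lambda>_. 1) q = 0" using qU unfolding U_def by auto
  have "rho M Q (XX q) \<le> ereal 0" using ellq rho_le_iff by blast
  moreover have "rho M Q (XX q) > 0" using rho_pos[OF q0 q1] .
  ultimately show False by (simp add: zero_ereal_def)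
qed

lemma KK_compact: "compact (KK \<nu> c)"
  using KK_bounded KK_closed by (simp add: compact_eq_bounded_closed)

lemma part3:
  assumes fin: "rho_nu M Q r R 1 < \<infinity>" and nu: "\<nu> \<ge> 0"
  shows "Pi_rho M Q r R \<nu> \<noteq> {} \<and> compact (Pi_rho M Q r R \<nu>) \<and> convex (Pi_rho M Q r R \<nu>)"
proof -
  let ?one = "(\<lambda>_. 1::real) :: 'a \<Rightarrow> real"
  obtain p1 where p1P: "p1 \<in> Pi_nu M r R 1" and p1f: "rho M Q (XX p1) < \<infinity>"
  proof -
    have "\<exists>p\<in>Pi_nu M r R 1. rho M Q (XX p) < \<infinity>" using fin unfolding rho_nu_def INF_less_iff .
    then show ?thesis using that by blast
  qed
  have "ereal (ell ?one p1) \<le> rho M Q (XX p1)" using ell_le_rho[OF one_Q] .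
  then obtain b where b: "rho M Q (XX p1) = ereal b" using p1f
    by (cases "rho M Q (XX p1)") auto
  have p1b: "\<forall>Z\<in>Q. ell Z p1 \<le> b" using rho_le_iff[of p1 b] b by simp
  define p0 where "p0 = \<nu> *\<^sub>R p1"
  define c0 where "c0 = \<nu> * b"
  have p0K: "p0 \<in> KK \<nu> c0"
  proof -
    have "- ell ?one p0 = \<nu>" using p1P unfolding Pi_eq p0_def by (simp add: ell_scale)
    moreover have "ell Z p0 \<le> c0" if "Z \<in> Q" for Z
      using p1b that nu unfolding p0_def c0_def by (simp add: ell_scale mult_left_mono)
    ultimately show ?thesis unfolding KK_def by auto
  qed
  have KP: "KK \<nu> c \<subseteq> Pi_nu M r R \<nu>" for c unfolding KK_def Pi_eq by auto
  have Krho: "p \<in> KK \<nu> c \<longleftrightarrow> p \<in> Pi_nu M r R \<nu> \<and> rho M Q (XX p) \<le> ereal c" for p c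
    unfolding KK_def Pi_eq rho_le_iff by auto
  define m where "m = rho_nu M Q r R \<nu>"
  have "m \<le> rho M Q (XX p0)" unfolding m_def rho_nu_def by (rule INF_lower) (use p0K KP in blast)
  also have "rho M Q (XX p0) \<le> ereal c0" using Krho p0K by blast
  finally have mle: "m \<le> ereal c0" .
  have mge: "ereal (- \<nu>) \<le> m" unfolding m_def rho_nu_def
  proof (rule INF_greatest)
    fix p assume "p \<in> Pi_nu M r R \<nu>"
    then have "- \<nu> = ell ?one p" unfolding Pi_eq by simp
    then show "ereal (- \<nu>) \<le> rho M Q (XX p)" using ell_le_rho[OF one_Q, of p] by simp
  qed
  obtain mr where mr: "m = ereal mr" using mle mge by (cases m) auto
  have mrc0: "mr \<le> c0" using mle mr by simp
  have "KK \<nu> (c0 + 1) \<inter> \<Inter> (KK \<nu> ` {c. mr < c}) \<noteq> {}"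
  proof (rule compact_imp_fip_image[OF KK_compact KK_closed])
    fix I' assume fI: "finite I'" and I': "I' \<subseteq> {c. mr < c}"
    define c1 where "c1 = Min (insert (c0 + 1) I')"
    have c1gt: "mr < c1" unfolding c1_def using fI I' mrc0 by auto
    have c1le: "c1 \<le> c" if "c \<in> insert (c0 + 1) I'" for c unfolding c1_def using fI that by auto
    have "m < ereal c1" using mr c1gt by simp
    then obtain p where pP: "p \<in> Pi_nu M r R \<nu>" and pl: "rho M Q (XX p) < ereal c1"
      unfolding m_def rho_nu_def by (auto simp: INF_less_iff)
    have "p \<in> KK \<nu> c" if "c \<in> insert (c0 + 1) I'" for c
    proof -
      have "rho M Q (XX p) \<le> ereal c1" using pl by simp
      also have "ereal c1 \<le> ereal c" using c1le[OF that] by simp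
      finally show ?thesis using Krho pP by blast
    qed
    then show "KK \<nu> (c0 + 1) \<inter> \<Inter> (KK \<nu> ` I') \<noteq> {}" by blast
  qed
  then obtain ps where ps: "\<And>c. mr < c \<Longrightarrow> ps \<in> KK \<nu> c" and psP: "ps \<in> Pi_nu M r R \<nu>"
    using KP by blast
  have psK: "ps \<in> KK \<nu> mr"
  proof -
    have "ell Z ps \<le> mr" if "Z \<in> Q" for Z
      by (rule dense_ge) (use ps that in \<open>auto simp: KK_def\<close>)
    then show ?thesis using psP unfolding KK_def Pi_eq by auto
  qed
  have eq: "Pi_rho M Q r R \<nu> = KK \<nu> mr"
  proof
    show "Pi_rho M Q r R \<nu> \<subseteq> KK \<nu> mr"
    proof
      fix p assume p: "p \<in> Pi_rho M Q r R \<nu>"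
      then have pP: "p \<in> Pi_nu M r R \<nu>" unfolding Pi_rho_def by auto
      have "rho M Q (XX p) \<le> m" unfolding m_def rho_nu_def
        using p unfolding Pi_rho_def by (auto intro: INF_greatest)
      then show "p \<in> KK \<nu> mr" using Krho pP mr by simp
    qed
    show "KK \<nu> mr \<subseteq> Pi_rho M Q r R \<nu>"
    proof
      fix p assume p: "p \<in> KK \<nu> mr"
      then have pP: "p \<in> Pi_nu M r R \<nu>" and pl: "rho M Q (XX p) \<le> ereal mr" using Krho by auto
      have "rho M Q (XX p) \<le> rho M Q (XX p')" if "p' \<in> Pi_nu M r R \<nu>" for p'
      proof -
        have "m \<le> rho M Q (XX p')" unfolding m_def rho_nu_def using that by (rule INF_lower)
        then show ?thesis using pl mr by simp
      qed
      moreover have "rho M Q (XX p) < \<infinity>"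
      proof -
        have "ereal mr < \<infinity>" by simp
        with pl show ?thesis by (rule le_less_trans)
      qed
      ultimately show "p \<in> Pi_rho M Q r R \<nu>" using pP unfolding Pi_rho_def by auto
    qed
  qed
  show ?thesis unfolding eq using psK KK_compact KK_convex by blast
qed

end
theorem proposition4p11:
  fixes M :: "'a measure" and r :: real
    and S0 :: "'d::finite \<Rightarrow> real" and S1 :: "'d \<Rightarrow> 'a \<Rightarrow> real"
    and L Q Qt :: "('a \<Rightarrow> real) set"
  assumes prob: "prob_space M"
    and r_gt: "r > -1"
    and S0_pos: "\<forall>i. S0 i > 0"
    and S1_meas: "\<forall>i. S1 i \<in> borel_measurable M"
    and nonred: "nonredundant M r S0 S1"
    and R_int: "\<forall>i. integrable M (ret S0 S1 i)"
    and nontriv: "\<exists>i. integral\<^sup>L M (ret S0 S1 i) \<noteq> r"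
    and L: "riesz_between M L"
    and X_in_L: "\<forall>p. excess r (ret S0 S1) p \<in> L"
    and Q_dens: "Q \<subseteq> densities M"
    and Q_convex: "convex_fset Q"
    and Q_ae: "ae_closed M Q"
    and one_Q: "(\<lambda>_. 1) \<in> Q"
    and condI: "\<forall>Z\<in>Q. \<forall>i. integrable M (\<lambda>x. Z x * ret S0 S1 i x)"
    and Qt_sub: "Qt \<subseteq> Q"
    and POS: "cond_POS M Qt"
    and INT: "cond_INT M Q Qt"
    and one_Qt: "(\<lambda>_. 1) \<in> Qt"
  shows "strictly_expectation_bounded M L Q
         \<and> Pi_rho M Q r (ret S0 S1) 0 = {0}
         \<and> (rho_nu M Q r (ret S0 S1) 1 < \<infinity> \<longrightarrow>
              (\<forall>\<nu>\<ge>0. Pi_rho M Q r (ret S0 S1) \<nu> \<noteq> {}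
                     \<and> compact (Pi_rho M Q r (ret S0 S1) \<nu>)
                     \<and> convex (Pi_rho M Q r (ret S0 S1) \<nu>)))"
proof -
  interpret mkt M r S0 S1 L Q Qt
    using prob r_gt S0_pos S1_meas nonred R_int nontriv L X_in_L Q_dens Q_convex Q_ae one_Q
      condI Qt_sub POS INT one_Qt unfolding mkt_def by blast
  show ?thesis using SEB Pi_rho0 part3 by blast
qed

end
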